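(* Let $R$ be a Noetherian local ring which is not an integral domain. If $\gamma(\mathbb{AG}(R))<\infty$, then either $R$ is Gorenstein, or $R$ is an Artinian ring with only finitely many ideals.
   Context: All rings are commutative with $1\neq 0$. An ideal $I$ of $R$ is an annihilating-ideal if $IJ=(0)$ for some nonzero ideal $J$ of $R$. The annihilating-ideal graph $\mathbb{AG}(R)$ is the simple graph whose vertices are the nonzero annihilating-ideals of $R$, with distinct vertices $I,J$ adjacent iff $IJ=(0)$. The genus $\gamma(G)$ of a finite graph is the least $n$ such that $G$ embeds in the orientable surface of genus $n$; for an infinite graph, $\gamma(G)$ is the supremum of the genera of its finite subgraphs. A Noetherian local ring $(R,\mathfrak{m})$ is called Gorenstein if $\dim_{R/\mathfrak{m}}\operatorname{Ann}(\mathfrak{m})=1$. *)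

theory Defs
  imports Main "HOL-Library.Extended_Nat"
begin

definition is_ideal :: "'a::comm_ring_1 set \<Rightarrow> bool" where
  "is_ideal I \<longleftrightarrow> 0 \<in> I \<and> (\<forall>x\<in>I. \<forall>y\<in>I. x + y \<in> I) \<and> (\<forall>r. \<forall>x\<in>I. r * x \<in> I)"

definition ideal_prod :: "'a::comm_ring_1 set \<Rightarrow> 'a set \<Rightarrow> 'a set" where
  "ideal_prod I J = \<Inter>{K. is_ideal K \<and> (\<forall>x\<in>I. \<forall>y\<in>J. x * y \<in> K)}"

definition annihilating_ideal :: "'a::comm_ring_1 set \<Rightarrow> bool" where
  "annihilating_ideal I \<longleftrightarrow> is_ideal I \<and> (\<exists>J. is_ideal J \<and> J \<noteq> {0} \<and> ideal_prod I J = {0})"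

definition annihilator :: "'a::comm_ring_1 set \<Rightarrow> 'a set" where
  "annihilator S = {x. \<forall>s\<in>S. x * s = 0}"

definition maximal_ideal :: "'a::comm_ring_1 set \<Rightarrow> bool" where
  "maximal_ideal m \<longleftrightarrow> is_ideal m \<and> m \<noteq> UNIV \<and>
     (\<forall>J. is_ideal J \<and> m \<subseteq> J \<longrightarrow> J = m \<or> J = UNIV)"

definition local_ring :: "'a::comm_ring_1 itself \<Rightarrow> bool" where
  "local_ring _ \<longleftrightarrow> (\<exists>!m::'a set. maximal_ideal m)"

definition the_max_ideal :: "'a::comm_ring_1 set" where
  "the_max_ideal = (THE m. maximal_ideal m)"

definition noetherian_ring :: "'a::comm_ring_1 itself \<Rightarrow> bool" where
  "noetherian_ring _ \<longleftrightarrow> (\<forall>f :: nat \<Rightarrow> 'a set. (\<forall>n. is_ideal (f n) \<and> f n \<subseteq> f (Suc n))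
      \<longrightarrow> (\<exists>N. \<forall>n\<ge>N. f n = f N))"

definition artinian_ring :: "'a::comm_ring_1 itself \<Rightarrow> bool" where
  "artinian_ring _ \<longleftrightarrow> (\<forall>f :: nat \<Rightarrow> 'a set. (\<forall>n. is_ideal (f n) \<and> f (Suc n) \<subseteq> f n)
      \<longrightarrow> (\<exists>N. \<forall>n\<ge>N. f n = f N))"

definition integral_domain :: "'a::comm_ring_1 itself \<Rightarrow> bool" where
  "integral_domain _ \<longleftrightarrow> (1::'a) \<noteq> 0 \<and> (\<forall>x y :: 'a. x * y = 0 \<longrightarrow> x = 0 \<or> y = 0)"

text \<open>Gorenstein (Noetherian local, dim over R/m of Ann(m) equal to 1).  The R/m-vector
  space Ann(m) has dimension 1 iff it is spanned by a single nonzero vector x; the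
  R/m-span of x equals its R-multiples.\<close>
definition gorenstein :: "'a::comm_ring_1 itself \<Rightarrow> bool" where
  "gorenstein T \<longleftrightarrow> noetherian_ring T \<and> local_ring T \<and>
     (\<exists>x::'a. x \<noteq> 0 \<and> annihilator (the_max_ideal :: 'a set) = {r * x | r. True})"

definition AG_vertices :: "'a::comm_ring_1 itself \<Rightarrow> 'a set set" where
  "AG_vertices _ = {I. annihilating_ideal I \<and> I \<noteq> {0}}"

definition AG_edge :: "'a::comm_ring_1 set \<Rightarrow> 'a set \<Rightarrow> bool" where
  "AG_edge I J \<longleftrightarrow> I \<noteq> J \<and> ideal_prod I J = {0}"

text \<open>A graph is a vertex set V with an edge relation E (symmetric, irreflexive).
  Darts are ordered pairs (u,w) with u w adjacent.\<close>
definition darts :: "'v set \<Rightarrow> ('v \<Rightarrow> 'v \<Rightarrow> bool) \<Rightarrow> ('v \<times> 'v) set" where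
  "darts V E = {(u, w). u \<in> V \<and> w \<in> V \<and> E u w}"

definition rotation_system :: "'v set \<Rightarrow> ('v \<Rightarrow> 'v \<Rightarrow> bool) \<Rightarrow> ('v \<times> 'v \<Rightarrow> 'v \<times> 'v) \<Rightarrow> bool" where
  "rotation_system V E \<sigma> \<longleftrightarrow> bij_betw \<sigma> (darts V E) (darts V E) \<and>
     (\<forall>d\<in>darts V E. {(\<sigma> ^^ n) d | n. True} = {d' \<in> darts V E. fst d' = fst d})"

definition face_perm :: "('v \<times> 'v \<Rightarrow> 'v \<times> 'v) \<Rightarrow> 'v \<times> 'v \<Rightarrow> 'v \<times> 'v" where
  "face_perm \<sigma> d = \<sigma> (snd d, fst d)"

definition faces :: "'v set \<Rightarrow> ('v \<Rightarrow> 'v \<Rightarrow> bool) \<Rightarrow> ('v \<times> 'v \<Rightarrow> 'v \<times> 'v) \<Rightarrow> ('v \<times> 'v) set set" where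
  "faces V E \<sigma> = {{(face_perm \<sigma> ^^ n) d | n. True} | d. d \<in> darts V E}"

definition nonisolated :: "'v set \<Rightarrow> ('v \<Rightarrow> 'v \<Rightarrow> bool) \<Rightarrow> 'v set" where
  "nonisolated V E = {v \<in> V. \<exists>w\<in>V. E v w}"

definition nontrivial_components :: "'v set \<Rightarrow> ('v \<Rightarrow> 'v \<Rightarrow> bool) \<Rightarrow> 'v set set" where
  "nontrivial_components V E =
     {{w. (\<lambda>a b. a \<in> V \<and> b \<in> V \<and> E a b)\<^sup>*\<^sup>* v w} | v. v \<in> nonisolated V E}"

text \<open>Genus of a finite graph: minimum over rotation systems of the total genus given by
  Euler's formula summed over the components (isolated vertices contribute 0):
  2g = 2c - V + E - F.\<close>
definition finite_graph_genus :: "'v set \<Rightarrow> ('v \<Rightarrow> 'v \<Rightarrow> bool) \<Rightarrow> nat" where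
  "finite_graph_genus V E = (LEAST g. \<exists>\<sigma>. rotation_system V E \<sigma> \<and>
      2 * g + card (nonisolated V E) + card (faces V E \<sigma>)
        = 2 * card (nontrivial_components V E) + card (darts V E) div 2)"

definition finite_subgraph :: "'v set \<Rightarrow> ('v \<Rightarrow> 'v \<Rightarrow> bool) \<Rightarrow> 'v set \<Rightarrow> ('v \<Rightarrow> 'v \<Rightarrow> bool) \<Rightarrow> bool" where
  "finite_subgraph W F V E \<longleftrightarrow> finite W \<and> W \<subseteq> V \<and>
     (\<forall>a b. F a b \<longrightarrow> a \<in> W \<and> b \<in> W \<and> E a b) \<and> (\<forall>a b. F a b \<longrightarrow> F b a) \<and> (\<forall>a. \<not> F a a)"

text \<open>Genus of an arbitrary (possibly infinite) graph: supremum of the genera of its finite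
  subgraphs (for finite graphs this agrees with the genus itself).\<close>
definition graph_genus :: "'v set \<Rightarrow> ('v \<Rightarrow> 'v \<Rightarrow> bool) \<Rightarrow> enat" where
  "graph_genus V E = (SUP p \<in> {(W, F). finite_subgraph W F V E}. enat (finite_graph_genus (fst p) (snd p)))"

end

theory Submission
  imports Defs
begin

definition pid :: "'a::comm_ring_1 \<Rightarrow> 'a set" where
  "pid x = {r * x | r. True}"

lemma ideal_pid: "is_ideal (pid x)"
  unfolding is_ideal_def pid_def
proof (intro conjI ballI allI)
  show "0 \<in> {r * x |r. True}" by (auto intro: exI[of _ 0])
next
  fix a b assume "a \<in> {r * x |r. True}" "b \<in> {r * x |r. True}"
  then obtain r s where "a = r * x" "b = s * x" by auto
  then have "a + b = (r + s) * x" by (simp add: distrib_right)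
  then show "a + b \<in> {r * x |r. True}" by blast
next
  fix c a assume "a \<in> {r * x |r. True}"
  then obtain r where "a = r * x" by auto
  then have "c * a = (c * r) * x" by (simp add: mult.assoc)
  then show "c * a \<in> {r * x |r. True}" by blast
qed

lemma pid_self: "x \<in> pid x"
  unfolding pid_def by (auto intro: exI[of _ 1])

lemma pid_zero_iff: "pid x = {0} \<longleftrightarrow> x = 0"
  using pid_self[of x] unfolding pid_def by auto

lemma ideal_mult: "is_ideal I \<Longrightarrow> x \<in> I \<Longrightarrow> r * x \<in> I"
  unfolding is_ideal_def by auto

lemma ideal_mult2: "is_ideal I \<Longrightarrow> x \<in> I \<Longrightarrow> x * r \<in> I"
  unfolding is_ideal_def by (metis mult.commute)

lemma ideal_add: "is_ideal I \<Longrightarrow> x \<in> I \<Longrightarrow> y \<in> I \<Longrightarrow> x + y \<in> I"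
  unfolding is_ideal_def by auto

lemma ideal_zero: "is_ideal I \<Longrightarrow> 0 \<in> I"
  unfolding is_ideal_def by auto

lemma ideal_uminus: "is_ideal I \<Longrightarrow> x \<in> I \<Longrightarrow> - x \<in> I"
  using ideal_mult[of I x "-1"] by simp

lemma ideal_diff: "is_ideal I \<Longrightarrow> x \<in> I \<Longrightarrow> y \<in> I \<Longrightarrow> x - y \<in> I"
  using ideal_add[of I x "-y"] ideal_uminus[of I y] by simp

lemma pid_sub: "is_ideal I \<Longrightarrow> x \<in> I \<Longrightarrow> pid x \<subseteq> I"
  unfolding pid_def using ideal_mult by blast

lemma ideal_one: "is_ideal I \<Longrightarrow> 1 \<in> I \<Longrightarrow> I = UNIV"
  using ideal_mult[of I 1] by auto

lemma ideal_zero_set: "is_ideal {0}"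
  unfolding is_ideal_def by auto

lemma ideal_prod_zero:
  assumes "\<forall>x\<in>I. \<forall>y\<in>J. x * y = 0"
  shows "ideal_prod I J = {0}"
proof -
  have "ideal_prod I J \<subseteq> {0}" unfolding ideal_prod_def using assms ideal_zero_set by blast
  moreover have "0 \<in> ideal_prod I J" unfolding ideal_prod_def is_ideal_def by blast
  ultimately show ?thesis by blast
qed

lemma ideal_prod_comm: "ideal_prod I J = ideal_prod J I"
  unfolding ideal_prod_def by (metis mult.commute)

lemma exists_maximal:
  fixes J :: "'a::comm_ring_1 set"
  assumes J: "is_ideal J" "1 \<notin> J"
  shows "\<exists>M. maximal_ideal M \<and> J \<subseteq> M"
proof -
  let ?A = "{K. is_ideal K \<and> J \<subseteq> K \<and> (1::'a) \<notin> K}"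
  have "\<forall>C\<in>chains ?A. \<exists>U\<in>?A. \<forall>X\<in>C. X \<subseteq> U"
  proof
    fix C assume C: "C \<in> chains ?A"
    show "\<exists>U\<in>?A. \<forall>X\<in>C. X \<subseteq> U"
    proof (cases "C = {}")
      case True then show ?thesis using J by auto
    next
      case False
      have sub: "C \<subseteq> ?A" and ch: "\<forall>X\<in>C. \<forall>Y\<in>C. X \<subseteq> Y \<or> Y \<subseteq> X"
        using C unfolding chains_def chain_subset_def by auto
      have "is_ideal (\<Union>C)"
        unfolding is_ideal_def
      proof (intro conjI ballI allI)
        show "0 \<in> \<Union>C" using False sub ideal_zero by blast
      next
        fix x y assume "x \<in> \<Union>C" "y \<in> \<Union>C"
        then obtain X Y where "X \<in> C" "Y \<in> C" "x \<in> X" "y \<in> Y" by auto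
        moreover have "X \<subseteq> Y \<or> Y \<subseteq> X" using ch \<open>X \<in> C\<close> \<open>Y \<in> C\<close> by blast
        moreover have "is_ideal X" "is_ideal Y" using sub \<open>X \<in> C\<close> \<open>Y \<in> C\<close> by auto
        ultimately have "x + y \<in> X \<or> x + y \<in> Y" using ideal_add by blast
        then show "x + y \<in> \<Union>C" using \<open>X \<in> C\<close> \<open>Y \<in> C\<close> by blast
      next
        fix r x assume "x \<in> \<Union>C"
        then show "r * x \<in> \<Union>C" using sub ideal_mult by blast
      qed
      moreover have "J \<subseteq> \<Union>C" using False sub by blast
      moreover have "1 \<notin> \<Union>C" using sub by blast
      ultimately show ?thesis by blast
    qed
  qed
  from Zorn_Lemma2[OF this] obtain M where M: "M \<in> ?A" and mx: "\<forall>X\<in>?A. M \<subseteq> X \<longrightarrow> X = M"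
    by blast
  have "maximal_ideal M"
    unfolding maximal_ideal_def
  proof (intro conjI allI impI)
    show "is_ideal M" using M by auto
    show "M \<noteq> UNIV" using M by auto
    fix K assume K: "is_ideal K \<and> M \<subseteq> K"
    show "K = M \<or> K = UNIV"
    proof (cases "1 \<in> K")
      case True then show ?thesis using K ideal_one by blast
    next
      case False then show ?thesis using K M mx by auto
    qed
  qed
  then show ?thesis using M by auto
qed

lemma max_m:
  assumes "local_ring TYPE('a::comm_ring_1)"
  shows "maximal_ideal (the_max_ideal :: 'a set)"
  using assms unfolding local_ring_def the_max_ideal_def by (rule theI')

lemma max_uniq:
  assumes "local_ring TYPE('a::comm_ring_1)" "maximal_ideal (M :: 'a set)"
  shows "M = the_max_ideal"
  using assms max_m[OF assms(1)] unfolding local_ring_def by blast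

lemma m_ideal:
  assumes "local_ring TYPE('a::comm_ring_1)"
  shows "is_ideal (the_max_ideal :: 'a set)"
  using max_m[OF assms] unfolding maximal_ideal_def by blast

lemma one_notin_m:
  assumes "local_ring TYPE('a::comm_ring_1)"
  shows "(1::'a) \<notin> the_max_ideal"
  using max_m[OF assms] ideal_one unfolding maximal_ideal_def by blast

lemma proper_sub_m:
  assumes "local_ring TYPE('a::comm_ring_1)" "is_ideal (J::'a set)" "1 \<notin> J"
  shows "J \<subseteq> the_max_ideal"
  using exists_maximal[OF assms(2,3)] max_uniq[OF assms(1)] by blast

lemma unit_notin_m:
  assumes "local_ring TYPE('a::comm_ring_1)" "(x::'a) \<notin> the_max_ideal"
  shows "\<exists>u. u * x = 1"
proof -
  have "1 \<in> pid x"
  proof (rule ccontr)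
    assume "1 \<notin> pid x"
    then have "pid x \<subseteq> the_max_ideal" using proper_sub_m[OF assms(1) ideal_pid] by blast
    then show False using pid_self assms(2) by blast
  qed
  then show ?thesis unfolding pid_def by auto
qed

lemma one_minus_m:
  assumes "local_ring TYPE('a::comm_ring_1)" "(y::'a) \<in> the_max_ideal"
  shows "\<exists>u. u * (1 - y) = 1"
proof -
  have "1 - y \<notin> the_max_ideal"
  proof
    assume "1 - y \<in> the_max_ideal"
    then have "(1 - y) + y \<in> the_max_ideal" using ideal_add[OF m_ideal[OF assms(1)]] assms(2) by blast
    then show False using one_notin_m[OF assms(1)] by simp
  qed
  then show ?thesis using unit_notin_m[OF assms(1)] by blast
qed

lemma infinite_subideals:
  fixes x :: "'a::comm_ring_1"
  assumes loc: "local_ring TYPE('a)" and S0: "annihilator (the_max_ideal :: 'a set) = {0}"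
    and x: "x \<noteq> 0"
  shows "infinite {J. is_ideal J \<and> J \<noteq> {0} \<and> J \<subseteq> pid x}"
proof
  let ?F = "{J. is_ideal J \<and> J \<noteq> {0} \<and> J \<subseteq> pid x}"
  assume fin: "finite ?F"
  have "pid x \<noteq> {0}" using pid_zero_iff x by blast
  then have "pid x \<in> ?F" using ideal_pid[of x] by simp
  then have "?F \<noteq> {}" by blast
  from finite_has_minimal[OF fin this] obtain I where I: "I \<in> ?F" and Imin: "\<forall>b\<in>?F. b \<le> I \<longrightarrow> I = b"
    by blast
  have Iid: "is_ideal I" using I by blast
  have "I \<noteq> {0}" "0 \<in> I" using I ideal_zero[OF Iid] by auto
  then obtain z where z: "z \<in> I" "z \<noteq> 0" by blast
  have "z \<notin> annihilator the_max_ideal" using S0 z by blast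
  then obtain y where y: "y \<in> the_max_ideal" "z * y \<noteq> 0" unfolding annihilator_def by blast
  have zyI: "z * y \<in> I" using ideal_mult2[OF Iid z(1)] .
  have "pid (z * y) \<subseteq> pid x" using pid_sub[OF Iid zyI] I by blast
  then have "pid (z * y) \<in> ?F" using ideal_pid[of "z*y"] pid_zero_iff[of "z*y"] y(2) by blast
  moreover have "pid (z * y) \<le> I" using pid_sub[OF Iid zyI] by simp
  ultimately have "I = pid (z * y)" using Imin by metis
  then have "z \<in> pid (z * y)" using z by blast
  then obtain r where r: "z = r * (z * y)" unfolding pid_def by blast
  have ry: "r * y \<in> the_max_ideal" using ideal_mult[OF m_ideal[OF loc] y(1)] .
  obtain u where u: "u * (1 - r * y) = 1" using one_minus_m[OF loc ry] by blast
  have "z * (1 - r * y) = 0" using r by (simp add: algebra_simps)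
  then have "u * (z * (1 - r * y)) = 0" by simp
  moreover have "u * (z * (1 - r * y)) = (u * (1 - r * y)) * z" by (simp only: ac_simps)
  ultimately have "z = 0" using u by simp
  then show False using z by blast
qed

lemma finite_ideals_artinian:
  assumes fin: "finite {I :: 'a::comm_ring_1 set. is_ideal I}"
  shows "artinian_ring TYPE('a)"
  unfolding artinian_ring_def
proof (intro allI impI)
  fix f :: "nat \<Rightarrow> 'a set"
  assume f: "\<forall>n. is_ideal (f n) \<and> f (Suc n) \<subseteq> f n"
  have "range f \<subseteq> {I. is_ideal I}" using f by auto
  then have "finite (range f)" using fin finite_subset by blast
  moreover have "range f \<noteq> {}" by simp
  ultimately obtain I where I: "I \<in> range f" and Imin: "\<forall>b\<in>range f. b \<le> I \<longrightarrow> I = b"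
    using finite_has_minimal by metis
  obtain N where N: "I = f N" using I by blast
  have "\<forall>n\<ge>N. f n = f N"
  proof (intro allI impI)
    fix n assume "N \<le> n"
    then have "f n \<le> f N" using lift_Suc_antimono_le[of f] f by blast
    then show "f n = f N" using Imin N by blast
  qed
  then show "\<exists>N. \<forall>n\<ge>N. f n = f N" by blast
qed

lemma alg_main:
  fixes dummy :: "'a::comm_ring_1 itself"
  assumes one: "(1::'a) \<noteq> 0"
    and noeth: "noetherian_ring TYPE('a)"
    and loc: "local_ring TYPE('a)"
    and nd: "\<not> integral_domain TYPE('a)"
    and ng: "\<not> gorenstein TYPE('a)"
    and na: "\<not> (artinian_ring TYPE('a) \<and> finite {I :: 'a set. is_ideal I})"
  shows "\<exists>(A :: 'a set set) B. card A = 3 \<and> infinite B \<and> A \<inter> B = {} \<and>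
            (\<forall>I\<in>A \<union> B. is_ideal I \<and> I \<noteq> {0}) \<and> (\<forall>a\<in>A. \<forall>b\<in>B. \<forall>x\<in>a. \<forall>y\<in>b. x * y = 0)"
proof -
  let ?m = "the_max_ideal :: 'a set"
  let ?S = "annihilator ?m"
  have Sid: "is_ideal ?S"
    unfolding is_ideal_def annihilator_def by (auto simp: algebra_simps)
  show ?thesis
  proof (cases "?S = {0}")
    case True
    obtain a b :: 'a where ab: "a \<noteq> 0" "b \<noteq> 0" "a * b = 0"
      using nd one unfolding integral_domain_def by blast
    let ?FA = "{J. is_ideal J \<and> J \<noteq> {0} \<and> J \<subseteq> pid a}"
    let ?FB = "{J. is_ideal J \<and> J \<noteq> {0} \<and> J \<subseteq> pid b}"
    have iA: "infinite ?FA" using infinite_subideals[OF loc True ab(1)] .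
    have iB: "infinite ?FB" using infinite_subideals[OF loc True ab(2)] .
    obtain A where A: "finite A" "card A = 3" "A \<subseteq> ?FA" using infinite_arbitrarily_large[OF iA] by blast
    have iB': "infinite (?FB - A)" using iB A(1) by simp
    have prod: "\<forall>I\<in>A. \<forall>J\<in>?FB - A. \<forall>x\<in>I. \<forall>y\<in>J. x * y = 0"
    proof (intro ballI)
      fix I J x y assume "I \<in> A" "J \<in> ?FB - A" "x \<in> I" "y \<in> J"
      then have "x \<in> pid a" "y \<in> pid b" using A by blast+
      then obtain r s where "x = r * a" "y = s * b" unfolding pid_def by blast
      then have "x * y = (r * s) * (a * b)" by (simp add: ac_simps)
      then show "x * y = 0" using ab by simp
    qed
    have "\<forall>I\<in>A \<union> (?FB - A). is_ideal I \<and> I \<noteq> {0}" using A(3) by blast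
    moreover have "A \<inter> (?FB - A) = {}" by blast
    ultimately show ?thesis using A(2) iB' prod by blast
  next
    case False
    then obtain s where s: "s \<in> ?S" "s \<noteq> 0" using ideal_zero[OF Sid] by blast
    have "?S \<noteq> pid s"
    proof
      assume "?S = pid s"
      then have "gorenstein TYPE('a)" using noeth loc s(2) unfolding gorenstein_def pid_def by blast
      then show False using ng by blast
    qed
    moreover have "pid s \<subseteq> ?S" using pid_sub[OF Sid s(1)] .
    ultimately obtain t where t: "t \<in> ?S" "t \<notin> pid s" by blast
    have t0: "t \<noteq> 0" using t(2) ideal_zero[OF ideal_pid] by metis
    have sm: "\<And>r. r \<in> ?m \<Longrightarrow> s * r = 0" using s(1) unfolding annihilator_def by blast
    have tm: "\<And>r. r \<in> ?m \<Longrightarrow> t * r = 0" using t(1) unfolding annihilator_def by blast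
    have stS: "s + t \<in> ?S" using ideal_add[OF Sid s(1) t(1)] .
    have d1: "pid s \<noteq> pid t" using t(2) pid_self[of t] by blast
    have d2: "pid (s + t) \<noteq> pid s"
    proof
      assume "pid (s + t) = pid s"
      then have "s + t \<in> pid s" using pid_self by blast
      then have "(s + t) - s \<in> pid s" using ideal_diff[OF ideal_pid _ pid_self] by blast
      then show False using t(2) by simp
    qed
    have sNt: "s \<notin> pid t"
    proof
      assume "s \<in> pid t"
      then obtain r where r: "s = r * t" unfolding pid_def by blast
      show False
      proof (cases "r \<in> ?m")
        case True
        then have "s = 0" using r tm[OF True] by (simp add: mult.commute)
        then show False using s by blast
      next
        case False
        then obtain u where u: "u * r = 1" using unit_notin_m[OF loc] by blast
        have "u * s = (u * r) * t" using r by (simp add: mult.assoc)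
        then have "t = u * s" using u by simp
        then show False using t(2) unfolding pid_def by blast
      qed
    qed
    have d3: "pid (s + t) \<noteq> pid t"
    proof
      assume "pid (s + t) = pid t"
      then have "s + t \<in> pid t" using pid_self by blast
      then have "(s + t) - t \<in> pid t" using ideal_diff[OF ideal_pid _ pid_self] by blast
      then show False using sNt by simp
    qed
    have st0: "s + t \<noteq> 0"
    proof
      assume "s + t = 0"
      then have "t = (-1) * s" by (simp add: add_eq_0_iff2)
      then show False using t(2) unfolding pid_def by blast
    qed
    let ?A = "{pid s, pid t, pid (s + t)}"
    have n1: "pid s \<notin> {pid t, pid (s + t)}" using d1 d2 by auto
    have n2: "pid t \<notin> {pid (s + t)}" using d3 by auto
    have c1: "card {pid (s + t)} = 1" by simp
    have c2: "card {pid t, pid (s + t)} = Suc (card {pid (s + t)})"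
      by (rule card_insert_disjoint[OF finite.insertI[OF finite.emptyI] n2])
    have c3: "card ?A = Suc (card {pid t, pid (s + t)})"
      by (rule card_insert_disjoint[OF finite.insertI[OF finite.insertI[OF finite.emptyI]] n1])
    have cA: "card ?A = 3" using c1 c2 c3 by (simp only: numeral_3_eq_3)
    have inf: "infinite {I :: 'a set. is_ideal I}" using na finite_ideals_artinian by blast
    let ?B = "{J. is_ideal J \<and> J \<noteq> {0} \<and> J \<noteq> UNIV} - ?A"
    have "{I :: 'a set. is_ideal I} \<subseteq> ?B \<union> (?A \<union> {{0}, UNIV})" by blast
    moreover have "finite (?A \<union> {{0}, UNIV})" by simp
    ultimately have iB: "infinite ?B" using inf
      by (meson finite_UnI finite_subset)
    have Aid: "\<forall>I\<in>?A. is_ideal I \<and> I \<noteq> {0}"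
      using ideal_pid[of s] ideal_pid[of t] ideal_pid[of "s+t"] pid_zero_iff[of s] pid_zero_iff[of t]
        pid_zero_iff[of "s+t"] s(2) t0 st0 by blast
    have AS: "\<forall>I\<in>?A. I \<subseteq> ?S" using pid_sub[OF Sid s(1)] pid_sub[OF Sid t(1)] pid_sub[OF Sid stS] by blast
    have prod: "\<forall>I\<in>?A. \<forall>J\<in>?B. \<forall>x\<in>I. \<forall>y\<in>J. x * y = 0"
    proof (intro ballI)
      fix I J x y assume "I \<in> ?A" "J \<in> ?B" "x \<in> I" "y \<in> J"
      then have xS: "x \<in> ?S" using AS by blast
      have "is_ideal J" "J \<noteq> UNIV" using \<open>J \<in> ?B\<close> by auto
      then have "1 \<notin> J" using ideal_one by blast
      then have "J \<subseteq> ?m" using proper_sub_m[OF loc \<open>is_ideal J\<close>] by blast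
      then show "x * y = 0" using xS \<open>y \<in> J\<close> unfolding annihilator_def by blast
    qed
    have Bid: "\<forall>I\<in>?B. is_ideal I \<and> I \<noteq> {0}" by simp
    have U: "\<forall>I\<in>?A \<union> ?B. is_ideal I \<and> I \<noteq> {0}" unfolding ball_Un using Aid Bid by (rule conjI)
    have D: "?A \<inter> ?B = {}" by (rule Diff_disjoint)
    have all: "card ?A = 3 \<and> infinite ?B \<and> ?A \<inter> ?B = {} \<and>
            (\<forall>I\<in>?A \<union> ?B. is_ideal I \<and> I \<noteq> {0}) \<and> (\<forall>a\<in>?A. \<forall>b\<in>?B. \<forall>x\<in>a. \<forall>y\<in>b. x * y = 0)"
      using cA iB D U prod by (intro conjI)
    show ?thesis by (rule exI[of _ ?A], rule exI[of _ ?B], rule all)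
  qed
qed

definition orb :: "('b \<Rightarrow> 'b) \<Rightarrow> 'b \<Rightarrow> 'b set" where
  "orb f d = {(f ^^ n) d | n. True}"

lemma orb_self: "d \<in> orb f d"
  unfolding orb_def mem_Collect_eq by (rule exI[of _ 0]) simp

lemma funpow_in:
  assumes "f ` D \<subseteq> D" "d \<in> D" shows "(f ^^ n) d \<in> D"
  using assms by (induction n) (auto simp: image_subset_iff)

lemma orb_sub_D: "f ` D \<subseteq> D \<Longrightarrow> d \<in> D \<Longrightarrow> orb f d \<subseteq> D"
  unfolding orb_def using funpow_in[of f D d] by blast

lemma funpow_cancel:
  assumes "f ` D \<subseteq> D" "inj_on f D" "d \<in> D" "e \<in> D" "(f ^^ i) d = (f ^^ i) e"
  shows "d = e"
  using assms(3-5)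
proof (induction i arbitrary: d e)
  case 0 then show ?case by simp
next
  case (Suc i)
  have "(f ^^ i) (f d) = (f ^^ i) (f e)" using Suc.prems(3) by (simp add: funpow_Suc_right del: funpow.simps)
  then have "f d = f e" using Suc.IH[of "f d" "f e"] Suc.prems assms(1) by blast
  then show ?case using assms(2) Suc.prems by (meson inj_onD)
qed

lemma period:
  assumes fin: "finite D" and im: "f ` D \<subseteq> D" and inj: "inj_on f D" and d: "d \<in> D"
  shows "\<exists>k>0. (f ^^ k) d = d"
proof -
  have "\<not> inj (\<lambda>n. (f ^^ n) d)"
  proof
    assume "inj (\<lambda>n. (f ^^ n) d)"
    moreover have "range (\<lambda>n. (f ^^ n) d) \<subseteq> D" using funpow_in[OF im d] by blast
    ultimately have "finite (UNIV :: nat set)" using inj_on_finite fin by blast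
    then show False by simp
  qed
  then obtain i j where ij: "i \<noteq> j" "(f ^^ i) d = (f ^^ j) d" unfolding inj_def by blast
  {
    fix i j assume ij: "i < j" "(f ^^ i) d = (f ^^ j) d"
    have e1: "(f ^^ i) ((f ^^ (j - i)) d) = (f ^^ (i + (j - i))) d" by (simp only: funpow_add o_apply)
    have "i + (j - i) = j" using ij(1) by simp
    then have "(f ^^ i) d = (f ^^ i) ((f ^^ (j - i)) d)" using ij(2) e1 by simp
    then have "d = (f ^^ (j - i)) d" using funpow_cancel[OF im inj d funpow_in[OF im d]] by blast
    then have "\<exists>k>0. (f ^^ k) d = d" using ij(1) by (intro exI[of _ "j - i"]) auto
  }
  note * = this
  show ?thesis
  proof (cases "i < j")
    case True then show ?thesis using * ij by blast
  next
    case False then have "j < i" using ij by simp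
    then show ?thesis using * ij by metis
  qed
qed

lemma funpow_mult_fix: "(f ^^ k) d = d \<Longrightarrow> (f ^^ (k * j)) d = d"
proof (induction j)
  case 0 then show ?case by simp
next
  case (Suc j)
  have e1: "(f ^^ (k * j)) ((f ^^ k) d) = (f ^^ (k * j + k)) d" by (simp only: funpow_add o_apply)
  have "k * Suc j = k * j + k" by simp
  then have "(f ^^ (k * Suc j)) d = (f ^^ (k * j)) ((f ^^ k) d)" using e1 by (simp only:)
  then show ?case using Suc by simp
qed

lemma orb_eq:
  assumes fin: "finite D" and im: "f ` D \<subseteq> D" and inj: "inj_on f D" and d: "d \<in> D"
    and e: "e \<in> orb f d"
  shows "orb f e = orb f d"
proof -
  obtain j where j: "e = (f ^^ j) d" using e unfolding orb_def by blast
  have "orb f e \<subseteq> orb f d"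
  proof
    fix x assume "x \<in> orb f e"
    then obtain i where "x = (f ^^ i) e" unfolding orb_def by blast
    then have "x = (f ^^ (i + j)) d" using j by (simp only: funpow_add o_apply)
    then show "x \<in> orb f d" unfolding orb_def by blast
  qed
  moreover have "d \<in> orb f e"
  proof -
    obtain k where k: "k > 0" "(f ^^ k) d = d" using period[OF fin im inj d] by blast
    have kj: "(f ^^ (k * j)) d = d" using funpow_mult_fix[OF k(2)] .
    have "j \<le> k * j" using k(1) by simp
    have e1: "(f ^^ (k * j - j)) ((f ^^ j) d) = (f ^^ (k * j - j + j)) d" by (simp only: funpow_add o_apply)
    have "k * j - j + j = k * j" using \<open>j \<le> k * j\<close> by simp
    then have "(f ^^ (k * j - j)) e = (f ^^ (k * j)) d" using j e1 by simp
    then show ?thesis using kj unfolding orb_def by (metis (mono_tags, lifting) mem_Collect_eq)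
  qed
  moreover have "orb f d \<subseteq> orb f e"
  proof
    fix x assume "x \<in> orb f d"
    then obtain i where "x = (f ^^ i) d" unfolding orb_def by blast
    obtain l where "d = (f ^^ l) e" using \<open>d \<in> orb f e\<close> unfolding orb_def by blast
    then have "x = (f ^^ (i + l)) e" using \<open>x = _\<close> by (simp only: funpow_add o_apply)
    then show "x \<in> orb f e" unfolding orb_def by blast
  qed
  ultimately show ?thesis by blast
qed

lemma orb_count:
  assumes fin: "finite D" and im: "f ` D \<subseteq> D" and inj: "inj_on f D"
    and big: "\<And>d. d \<in> D \<Longrightarrow> 4 \<le> card (orb f d)"
  shows "4 * card (orb f ` D) \<le> card D"
proof -
  have U1: "\<Union> (orb f ` D) \<subseteq> D" using orb_sub_D[OF im] by (simp add: UN_least)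
  have U2: "D \<subseteq> \<Union> (orb f ` D)"
  proof
    fix x assume "x \<in> D" then show "x \<in> \<Union> (orb f ` D)" using orb_self[of x f] by (rule UN_I)
  qed
  have U: "\<Union> (orb f ` D) = D" using U1 U2 by (rule antisym)
  have pw: "pairwise disjnt (orb f ` D)"
  proof (rule pairwiseI)
    fix X Y assume "X \<in> orb f ` D" "Y \<in> orb f ` D" "X \<noteq> Y"
    then obtain d e where de: "d \<in> D" "e \<in> D" "X = orb f d" "Y = orb f e" by blast
    show "disjnt X Y"
    proof (rule ccontr)
      assume "\<not> disjnt X Y"
      then obtain x where x: "x \<in> orb f d" "x \<in> orb f e" using de unfolding disjnt_def by blast
      have "orb f x = orb f d" using orb_eq[OF fin im inj de(1) x(1)] .
      moreover have "orb f x = orb f e" using orb_eq[OF fin im inj de(2) x(2)] .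
      ultimately show False using \<open>X \<noteq> Y\<close> de by simp
    qed
  qed
  have finO: "\<And>X. X \<in> orb f ` D \<Longrightarrow> finite X"
  proof -
    fix X assume "X \<in> orb f ` D"
    then obtain d where "d \<in> D" "X = orb f d" by blast
    then show "finite X" using orb_sub_D[OF im] fin finite_subset by metis
  qed
  have "card D = sum card (orb f ` D)" using card_Union_disjoint[OF pw finO] U by simp
  moreover have "sum (\<lambda>_. 4) (orb f ` D) \<le> sum card (orb f ` D)"
  proof (rule sum_mono)
    fix X assume "X \<in> orb f ` D"
    then obtain d where "d \<in> D" "X = orb f d" by blast
    then show "4 \<le> card X" using big by simp
  qed
  moreover have "sum (\<lambda>_. 4) (orb f ` D) = 4 * card (orb f ` D)" by simp
  ultimately show ?thesis by linarith
qed

lemma rs_step: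
  assumes rs: "rotation_system V E \<sigma>" and d: "d \<in> darts V E"
  shows "\<sigma> d \<in> darts V E \<and> fst (\<sigma> d) = fst d"
proof -
  have "{(\<sigma> ^^ n) d | n. True} = {d' \<in> darts V E. fst d' = fst d}"
    using rs d unfolding rotation_system_def by blast
  moreover have "\<sigma> d \<in> {(\<sigma> ^^ n) d | n. True}"
    unfolding mem_Collect_eq by (rule exI[of _ 1]) simp
  ultimately show ?thesis by blast
qed

lemma rs_fix:
  assumes rs: "rotation_system V E \<sigma>" and d: "d \<in> darts V E" and fx: "\<sigma> d = d"
    and d': "d' \<in> darts V E" "fst d' = fst d"
  shows "d' = d"
proof -
  have pw: "(\<sigma> ^^ n) d = d" for n by (induction n) (simp_all add: fx)
  have "{(\<sigma> ^^ n) d | n. True} = {d' \<in> darts V E. fst d' = fst d}"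
    using rs d unfolding rotation_system_def by blast
  then have "d' \<in> {(\<sigma> ^^ n) d | n. True}" using d' by blast
  then show ?thesis using pw by auto
qed

lemma swap_dart:
  assumes sym: "\<forall>a b. E a b \<longrightarrow> E b a" and d: "d \<in> darts V E"
  shows "(snd d, fst d) \<in> darts V E"
  using assms unfolding darts_def by (cases d) auto

lemma fp_dart:
  assumes rs: "rotation_system V E \<sigma>" and sym: "\<forall>a b. E a b \<longrightarrow> E b a" and d: "d \<in> darts V E"
  shows "face_perm \<sigma> d \<in> darts V E \<and> fst (face_perm \<sigma> d) = snd d"
  using rs_step[OF rs swap_dart[OF sym d]] unfolding face_perm_def by simp

lemma fp_inj:
  assumes rs: "rotation_system V E \<sigma>" and sym: "\<forall>a b. E a b \<longrightarrow> E b a"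
  shows "inj_on (face_perm \<sigma>) (darts V E)"
proof (rule inj_onI)
  fix x y assume x: "x \<in> darts V E" and y: "y \<in> darts V E" and eq: "face_perm \<sigma> x = face_perm \<sigma> y"
  have inj: "inj_on \<sigma> (darts V E)" using rs unfolding rotation_system_def bij_betw_def by blast
  have "(snd x, fst x) = (snd y, fst y)"
    using inj_onD[OF inj _ swap_dart[OF sym x] swap_dart[OF sym y]] eq unfolding face_perm_def by blast
  then show "x = y" by (simp add: prod_eq_iff)
qed

lemma fp2_fix:
  assumes rs: "rotation_system V E \<sigma>" and sym: "\<forall>a b. E a b \<longrightarrow> E b a" and d: "d \<in> darts V E"
    and eq: "face_perm \<sigma> (face_perm \<sigma> d) = d"
  shows "\<sigma> d = d"
proof -
  let ?e = "face_perm \<sigma> d"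
  have e: "?e \<in> darts V E" "fst ?e = snd d" using fp_dart[OF rs sym d] by auto
  have "fst (face_perm \<sigma> ?e) = snd ?e" using fp_dart[OF rs sym e(1)] by auto
  then have "fst d = snd ?e" using eq by simp
  then have sw: "(snd ?e, fst ?e) = d" using e(2) by (simp add: prod_eq_iff)
  have "\<sigma> (snd ?e, fst ?e) = d" using eq unfolding face_perm_def by simp
  then show ?thesis using sw by simp
qed

lemma faces_image: "faces V E \<sigma> = orb (face_perm \<sigma>) ` darts V E"
  unfolding faces_def orb_def by blast

lemma bip_lower:
  fixes A B :: "'v set"
  assumes AB: "A \<inter> B = {}" "finite A" "finite B"
    and dA: "a1 \<in> A" "a2 \<in> A" "a1 \<noteq> a2" and dB: "b1 \<in> B" "b2 \<in> B" "b1 \<noteq> b2"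
    and F: "F = (\<lambda>u w. (u \<in> A \<and> w \<in> B) \<or> (u \<in> B \<and> w \<in> A))"
    and rs: "rotation_system (A \<union> B) F \<sigma>"
  shows "4 * card (faces (A \<union> B) F \<sigma>) \<le> card (darts (A \<union> B) F)"
proof -
  let ?D = "darts (A \<union> B) F"
  let ?p = "face_perm \<sigma>"
  have sym: "\<forall>a b. F a b \<longrightarrow> F b a" using F by auto
  have Dchar: "\<And>x. x \<in> ?D \<Longrightarrow> (fst x \<in> A \<and> snd x \<in> B) \<or> (fst x \<in> B \<and> snd x \<in> A)"
    unfolding darts_def F by auto
  have finD: "finite ?D"
  proof -
    have "?D \<subseteq> (A \<union> B) \<times> (A \<union> B)" unfolding darts_def by auto
    then show ?thesis using AB by (simp add: finite_subset)
  qed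
  have im: "?p ` ?D \<subseteq> ?D"
  proof (rule image_subsetI)
    fix x assume "x \<in> ?D" then show "?p x \<in> ?D" using fp_dart[OF rs sym] by simp
  qed
  have disj: "\<And>v. v \<in> A \<Longrightarrow> v \<notin> B" using AB(1) by blast
  have inj: "inj_on ?p ?D" using fp_inj[OF rs sym] .
  have side: "\<And>x. x \<in> ?D \<Longrightarrow> (fst (?p x) \<in> A) = (fst x \<notin> A)"
  proof -
    fix x assume x: "x \<in> ?D"
    have "fst (?p x) = snd x" using fp_dart[OF rs sym x] by simp
    then show "(fst (?p x) \<in> A) = (fst x \<notin> A)" using Dchar[OF x] disj by metis
  qed
  have deg: "\<And>x. x \<in> ?D \<Longrightarrow> \<exists>x'\<in>?D. x' \<noteq> x \<and> fst x' = fst x"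
  proof -
    fix x assume x: "x \<in> ?D"
    show "\<exists>x'\<in>?D. x' \<noteq> x \<and> fst x' = fst x"
    proof (cases "fst x \<in> A")
      case True
      have "(fst x, b1) \<in> ?D" "(fst x, b2) \<in> ?D" using True dB unfolding darts_def F by auto
      moreover have "(fst x, b1) \<noteq> x \<or> (fst x, b2) \<noteq> x" using dB(3) by (metis snd_conv)
      ultimately show ?thesis by (metis fst_conv)
    next
      case False
      then have "fst x \<in> B" using Dchar[OF x] by blast
      then have "(fst x, a1) \<in> ?D" "(fst x, a2) \<in> ?D" using dA unfolding darts_def F by auto
      moreover have "(fst x, a1) \<noteq> x \<or> (fst x, a2) \<noteq> x" using dA(3) by (metis snd_conv)
      ultimately show ?thesis by (metis fst_conv)
    qed
  qed
  have nofix: "\<And>x. x \<in> ?D \<Longrightarrow> ?p (?p x) \<noteq> x"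
  proof
    fix x assume x: "x \<in> ?D" and eq: "?p (?p x) = x"
    have "\<sigma> x = x" using fp2_fix[OF rs sym x eq] .
    moreover obtain x' where "x' \<in> ?D" "x' \<noteq> x" "fst x' = fst x" using deg[OF x] by blast
    ultimately show False using rs_fix[OF rs x] by blast
  qed
  have big: "\<And>d. d \<in> ?D \<Longrightarrow> 4 \<le> card (orb ?p d)"
  proof -
    fix d assume d: "d \<in> ?D"
    define d1 where "d1 = ?p d"
    define d2 where "d2 = ?p d1"
    define d3 where "d3 = ?p d2"
    have d1D: "d1 \<in> ?D" using im d unfolding d1_def by blast
    have d2D: "d2 \<in> ?D" using im d1D unfolding d2_def by blast
    have s1: "(fst d1 \<in> A) = (fst d \<notin> A)" using side[OF d] unfolding d1_def .
    have s2: "(fst d2 \<in> A) = (fst d1 \<notin> A)" using side[OF d1D] unfolding d2_def .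
    have s3: "(fst d3 \<in> A) = (fst d2 \<notin> A)" using side[OF d2D] unfolding d3_def .
    have n01: "d \<noteq> d1" using s1 by auto
    have n12: "d1 \<noteq> d2" using s2 by auto
    have n23: "d2 \<noteq> d3" using s3 by auto
    have n03: "d \<noteq> d3" using s1 s2 s3 by auto
    have n02: "d \<noteq> d2" using nofix[OF d] unfolding d2_def d1_def by auto
    have n13: "d1 \<noteq> d3" using nofix[OF d1D] unfolding d3_def d2_def by auto
    have "card {d, d1, d2, d3} = 4" using n01 n12 n23 n03 n02 n13 by simp
    moreover have "{d, d1, d2, d3} \<subseteq> orb ?p d"
    proof -
      have "(?p ^^ 0) d = d" "(?p ^^ 1) d = d1" "(?p ^^ 2) d = d2" "(?p ^^ 3) d = d3"
        unfolding d1_def d2_def d3_def by (simp_all add: numeral_3_eq_3 numeral_2_eq_2)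
      then show ?thesis unfolding orb_def by (metis (mono_tags, lifting) empty_subsetI insert_subset mem_Collect_eq)
    qed
    moreover have "finite (orb ?p d)" using orb_sub_D[OF im d] finD finite_subset by blast
    ultimately show "4 \<le> card (orb ?p d)" by (metis card_mono)
  qed
  show ?thesis unfolding faces_image using orb_count[OF finD im inj big] .
qed

lemma small3: "(c::nat) < 3 \<Longrightarrow> c = 0 \<or> c = 1 \<or> c = 2" by linarith

lemma crt3:
  fixes n a b :: nat
  assumes n: "n mod 3 = 1" and a: "a < 3" and b: "b < n"
  shows "\<exists>x. x mod 3 = a \<and> x mod n = b"
proof -
  define c where "c = b mod 3"
  define t where "t = (a + 3 - c) mod 3"
  have c3: "c < 3" unfolding c_def by simp
  have "(b + n * t) mod 3 = (b mod 3 + (n * t) mod 3) mod 3" by (simp only: mod_add_eq)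
  also have "(n * t) mod 3 = (n mod 3 * (t mod 3)) mod 3" by (simp only: mod_mult_eq)
  also have "\<dots> = t" using n unfolding t_def by simp
  finally have e: "(b + n * t) mod 3 = (c + t) mod 3" unfolding c_def .
  have "(c + t) mod 3 = a" unfolding t_def using small3[OF c3] small3[OF a] by auto
  then have x3: "(b + n * t) mod 3 = a" using e by simp
  have xn: "(b + n * t) mod n = b" using b by simp
  show ?thesis using x3 xn by blast
qed

lemma shift_ex:
  fixes n i i' j j' :: nat
  assumes n: "n mod 3 = 1" and i: "i < 3" "i' < 3" and j: "j < n" "j' < n"
  shows "\<exists>k. (i + k) mod 3 = i' \<and> (j + k) mod n = j'"
proof -
  have "(i' + 3 - i) mod 3 < 3" by simp
  moreover have "(j' + n - j) mod n < n" using j by simp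
  ultimately obtain x where x: "x mod 3 = (i' + 3 - i) mod 3" "x mod n = (j' + n - j) mod n"
    using crt3[OF n] by blast
  have "(i + x) mod 3 = (i + x mod 3) mod 3" by (simp only: mod_add_right_eq)
  also have "\<dots> = (i + (i' + 3 - i) mod 3) mod 3" using x(1) by simp
  also have "\<dots> = i'" using small3[OF i(1)] small3[OF i(2)] by auto
  finally have 1: "(i + x) mod 3 = i'" .
  have "(j + x) mod n = (j + x mod n) mod n" by (simp only: mod_add_right_eq)
  also have "\<dots> = (j + (j' + n - j) mod n) mod n" using x(2) by simp
  also have "\<dots> = (j + (j' + n - j)) mod n" by (simp only: mod_add_right_eq)
  also have "j + (j' + n - j) = j' + n" using j by simp
  also have "(j' + n) mod n = j'" using j by simp
  finally have 2: "(j + x) mod n = j'" .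
  show ?thesis using 1 2 by blast
qed

lemma suc_mod_val: "(j::nat) < n \<Longrightarrow> Suc j mod n = (if Suc j = n then 0 else Suc j)"
proof (cases "Suc j = n")
  case True then show ?thesis by simp
next
  case False
  assume "j < n" then have "Suc j < n" using False by linarith
  then show ?thesis using False by (simp only: mod_less if_False)
qed

lemma suc_mod_inj:
  fixes j j' n :: nat
  assumes j: "j < n" and j': "j' < n" and eq: "Suc j mod n = Suc j' mod n"
  shows "j = j'"
proof -
  have a: "Suc j mod n = (if Suc j = n then 0 else Suc j)" using suc_mod_val[OF j] .
  have b: "Suc j' mod n = (if Suc j' = n then 0 else Suc j')" using suc_mod_val[OF j'] .
  show ?thesis using a b eq j j' by (smt (verit) Suc_inject nat.distinct(1))
qed

lemma k3n_construct:
  fixes \<alpha> \<beta> :: "nat \<Rightarrow> 'v"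
  assumes ba: "bij_betw \<alpha> {0..<3} A" and bb: "bij_betw \<beta> {0..<n} B" and AB: "A \<inter> B = {}"
    and n3: "n mod 3 = 1"
    and F: "F = (\<lambda>u w. (u \<in> A \<and> w \<in> B) \<or> (u \<in> B \<and> w \<in> A))"
  shows "\<exists>\<sigma>. rotation_system (A \<union> B) F \<sigma> \<and> faces (A \<union> B) F \<sigma> = {darts (A \<union> B) F}"
proof -
  have npos: "0 < n"
  proof (rule ccontr)
    assume "\<not> 0 < n" then have "n = 0" by simp
    then show False using n3 by simp
  qed
  define ia where "ia = the_inv_into {0..<3} \<alpha>"
  define ib where "ib = the_inv_into {0..<n} \<beta>"
  define \<sigma> where "\<sigma> = (\<lambda>d. if fst d \<in> A then (fst d, \<beta> (Suc (ib (snd d)) mod n))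
                          else (fst d, \<alpha> (Suc (ia (snd d)) mod 3)))"
  let ?D = "darts (A \<union> B) F"
  have injA: "inj_on \<alpha> {0..<3}" using ba by (simp add: bij_betw_def)
  have injB: "inj_on \<beta> {0..<n}" using bb by (simp add: bij_betw_def)
  have imA: "\<alpha> ` {0..<3} = A" using ba by (simp add: bij_betw_def)
  have imB: "\<beta> ` {0..<n} = B" using bb by (simp add: bij_betw_def)
  have aA: "\<And>i. i < 3 \<Longrightarrow> \<alpha> i \<in> A" using imA by auto
  have bB: "\<And>j. j < n \<Longrightarrow> \<beta> j \<in> B" using imB by auto
  have aB: "\<And>i. i < 3 \<Longrightarrow> \<alpha> i \<notin> B" using aA AB by blast
  have bA: "\<And>j. j < n \<Longrightarrow> \<beta> j \<notin> A" using bB AB by blast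
  have Aex: "\<And>a. a \<in> A \<Longrightarrow> \<exists>i<3. a = \<alpha> i" using imA by auto
  have Bex: "\<And>b. b \<in> B \<Longrightarrow> \<exists>j<n. b = \<beta> j" using imB by auto
  have ainj: "\<And>i i'. i < 3 \<Longrightarrow> i' < 3 \<Longrightarrow> \<alpha> i = \<alpha> i' \<Longrightarrow> i = i'" using injA inj_onD by fastforce
  have binj: "\<And>j j'. j < n \<Longrightarrow> j' < n \<Longrightarrow> \<beta> j = \<beta> j' \<Longrightarrow> j = j'" using injB inj_onD by fastforce
  have ia: "\<And>i. i < 3 \<Longrightarrow> ia (\<alpha> i) = i" unfolding ia_def using the_inv_into_f_f[OF injA] by simp
  have ib: "\<And>j. j < n \<Longrightarrow> ib (\<beta> j) = j" unfolding ib_def using the_inv_into_f_f[OF injB] by simp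
  have Dchar: "\<And>x. x \<in> ?D \<Longrightarrow> (\<exists>i<3. \<exists>j<n. x = (\<alpha> i, \<beta> j)) \<or> (\<exists>i<3. \<exists>j<n. x = (\<beta> j, \<alpha> i))"
  proof -
    fix x assume "x \<in> ?D"
    then have "(fst x \<in> A \<and> snd x \<in> B) \<or> (fst x \<in> B \<and> snd x \<in> A)" unfolding darts_def F by auto
    then show "(\<exists>i<3. \<exists>j<n. x = (\<alpha> i, \<beta> j)) \<or> (\<exists>i<3. \<exists>j<n. x = (\<beta> j, \<alpha> i))"
    proof
      assume "fst x \<in> A \<and> snd x \<in> B"
      then obtain i j where "i < 3" "j < n" "fst x = \<alpha> i" "snd x = \<beta> j" using Aex Bex by metis
      then show ?thesis by (metis prod.collapse)
    next
      assume "fst x \<in> B \<and> snd x \<in> A"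
      then obtain i j where "i < 3" "j < n" "fst x = \<beta> j" "snd x = \<alpha> i" using Aex Bex by metis
      then show ?thesis by (metis prod.collapse)
    qed
  qed
  have Dab: "\<And>i j. i < 3 \<Longrightarrow> j < n \<Longrightarrow> (\<alpha> i, \<beta> j) \<in> ?D"
    unfolding darts_def F using aA bB by auto
  have Dba: "\<And>i j. i < 3 \<Longrightarrow> j < n \<Longrightarrow> (\<beta> j, \<alpha> i) \<in> ?D"
    unfolding darts_def F using aA bB by auto
  have finD: "finite ?D"
  proof -
    have "finite A" "finite B" using ba bb bij_betw_finite by blast+
    moreover have "?D \<subseteq> (A \<union> B) \<times> (A \<union> B)" unfolding darts_def by auto
    ultimately show ?thesis by (simp add: finite_subset)
  qed
  have sab: "\<And>i j. i < 3 \<Longrightarrow> j < n \<Longrightarrow> \<sigma> (\<alpha> i, \<beta> j) = (\<alpha> i, \<beta> (Suc j mod n))"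
    unfolding \<sigma>_def using aA ib by simp
  have sba: "\<And>i j. i < 3 \<Longrightarrow> j < n \<Longrightarrow> \<sigma> (\<beta> j, \<alpha> i) = (\<beta> j, \<alpha> (Suc i mod 3))"
    unfolding \<sigma>_def using bA ia by simp
  have pab: "\<And>i j k. i < 3 \<Longrightarrow> j < n \<Longrightarrow> (\<sigma> ^^ k) (\<alpha> i, \<beta> j) = (\<alpha> i, \<beta> ((j + k) mod n))"
  proof -
    fix i j k :: nat assume i: "i < 3" and j: "j < n"
    show "(\<sigma> ^^ k) (\<alpha> i, \<beta> j) = (\<alpha> i, \<beta> ((j + k) mod n))"
    proof (induction k)
      case 0 then show ?case using j by simp
    next
      case (Suc k)
      have "(\<sigma> ^^ Suc k) (\<alpha> i, \<beta> j) = \<sigma> (\<alpha> i, \<beta> ((j + k) mod n))" using Suc by simp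
      also have "\<dots> = (\<alpha> i, \<beta> (Suc ((j + k) mod n) mod n))" using sab[OF i] npos by simp
      also have "Suc ((j + k) mod n) mod n = (j + Suc k) mod n" by (simp add: mod_Suc_eq)
      finally show ?case .
    qed
  qed
  have pba: "\<And>i j k. i < 3 \<Longrightarrow> j < n \<Longrightarrow> (\<sigma> ^^ k) (\<beta> j, \<alpha> i) = (\<beta> j, \<alpha> ((i + k) mod 3))"
  proof -
    fix i j k :: nat assume i: "i < 3" and j: "j < n"
    show "(\<sigma> ^^ k) (\<beta> j, \<alpha> i) = (\<beta> j, \<alpha> ((i + k) mod 3))"
    proof (induction k)
      case 0 then show ?case using i by simp
    next
      case (Suc k)
      have "(\<sigma> ^^ Suc k) (\<beta> j, \<alpha> i) = \<sigma> (\<beta> j, \<alpha> ((i + k) mod 3))" using Suc by simp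
      also have "\<dots> = (\<beta> j, \<alpha> (Suc ((i + k) mod 3) mod 3))" using sba[OF _ j] by simp
      also have "Suc ((i + k) mod 3) mod 3 = (i + Suc k) mod 3" by (simp add: mod_Suc_eq)
      finally show ?case .
    qed
  qed
  have sD: "\<sigma> ` ?D \<subseteq> ?D"
  proof (rule image_subsetI)
    fix x assume x: "x \<in> ?D"
    show "\<sigma> x \<in> ?D" using Dchar[OF x]
    proof
      assume "\<exists>i<3. \<exists>j<n. x = (\<alpha> i, \<beta> j)"
      then obtain i j where ij: "i < 3" "j < n" "x = (\<alpha> i, \<beta> j)" by blast
      have "Suc j mod n < n" using npos by simp
      then show ?thesis using ij sab[OF ij(1,2)] Dab[OF ij(1)] by simp
    next
      assume "\<exists>i<3. \<exists>j<n. x = (\<beta> j, \<alpha> i)"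
      then obtain i j where ij: "i < 3" "j < n" "x = (\<beta> j, \<alpha> i)" by blast
      have "Suc i mod 3 < 3" by simp
      then show ?thesis using ij sba[OF ij(1,2)] Dba[OF _ ij(2)] by simp
    qed
  qed
  have sinj: "inj_on \<sigma> ?D"
  proof (rule inj_onI)
    fix x y assume x: "x \<in> ?D" and y: "y \<in> ?D" and eq: "\<sigma> x = \<sigma> y"
    show "x = y"
      using Dchar[OF x]
    proof
      assume "\<exists>i<3. \<exists>j<n. x = (\<alpha> i, \<beta> j)"
      then obtain i j where ij: "i < 3" "j < n" "x = (\<alpha> i, \<beta> j)" by blast
      show "x = y" using Dchar[OF y]
      proof
        assume "\<exists>i<3. \<exists>j<n. y = (\<alpha> i, \<beta> j)"
        then obtain i' j' where ij': "i' < 3" "j' < n" "y = (\<alpha> i', \<beta> j')" by blast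
        have "(\<alpha> i, \<beta> (Suc j mod n)) = (\<alpha> i', \<beta> (Suc j' mod n))" using eq ij ij' sab by simp
        then have "\<alpha> i = \<alpha> i'" "\<beta> (Suc j mod n) = \<beta> (Suc j' mod n)" by simp_all
        then have "i = i'" "Suc j mod n = Suc j' mod n" using ainj binj ij ij' npos by simp_all
        then show "x = y" using suc_mod_inj[OF ij(2) ij'(2)] ij ij' by simp
      next
        assume "\<exists>i<3. \<exists>j<n. y = (\<beta> j, \<alpha> i)"
        then obtain i' j' where ij': "i' < 3" "j' < n" "y = (\<beta> j', \<alpha> i')" by blast
        have "\<alpha> i = \<beta> j'" using eq ij ij' sab sba by simp
        then show "x = y" using aA[OF ij(1)] bA[OF ij'(2)] by simp
      qed
    next
      assume "\<exists>i<3. \<exists>j<n. x = (\<beta> j, \<alpha> i)"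
      then obtain i j where ij: "i < 3" "j < n" "x = (\<beta> j, \<alpha> i)" by blast
      show "x = y" using Dchar[OF y]
      proof
        assume "\<exists>i<3. \<exists>j<n. y = (\<alpha> i, \<beta> j)"
        then obtain i' j' where ij': "i' < 3" "j' < n" "y = (\<alpha> i', \<beta> j')" by blast
        have "\<beta> j = \<alpha> i'" using eq ij ij' sab sba by simp
        then show "x = y" using aA[OF ij'(1)] bA[OF ij(2)] by simp
      next
        assume "\<exists>i<3. \<exists>j<n. y = (\<beta> j, \<alpha> i)"
        then obtain i' j' where ij': "i' < 3" "j' < n" "y = (\<beta> j', \<alpha> i')" by blast
        have "(\<beta> j, \<alpha> (Suc i mod 3)) = (\<beta> j', \<alpha> (Suc i' mod 3))" using eq ij ij' sba by simp
        then have "\<beta> j = \<beta> j'" "\<alpha> (Suc i mod 3) = \<alpha> (Suc i' mod 3)" by simp_all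
        then have "j = j'" "Suc i mod 3 = Suc i' mod 3" using ainj binj ij ij' by simp_all
        then show "x = y" using suc_mod_inj[of i 3 i'] ij ij' by simp
      qed
    qed
  qed
  have rs: "rotation_system (A \<union> B) F \<sigma>"
    unfolding rotation_system_def
  proof (intro conjI ballI)
    show "bij_betw \<sigma> ?D ?D" unfolding bij_betw_def using sinj endo_inj_surj[OF finD sD sinj] by blast
  next
    fix d assume d: "d \<in> ?D"
    show "{(\<sigma> ^^ n) d |n. True} = {d' \<in> ?D. fst d' = fst d}"
      using Dchar[OF d]
    proof
      assume "\<exists>i<3. \<exists>j<n. d = (\<alpha> i, \<beta> j)"
      then obtain i j where ij: "i < 3" "j < n" "d = (\<alpha> i, \<beta> j)" by blast
      show ?thesis
      proof
        show "{(\<sigma> ^^ k) d |k. True} \<subseteq> {d' \<in> ?D. fst d' = fst d}"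
          using pab[OF ij(1,2)] ij Dab npos by auto
      next
        show "{d' \<in> ?D. fst d' = fst d} \<subseteq> {(\<sigma> ^^ k) d |k. True}"
        proof
          fix x assume x: "x \<in> {d' \<in> ?D. fst d' = fst d}"
          then have xD: "x \<in> ?D" and fx: "fst x = \<alpha> i" using ij by auto
          obtain j' where j': "j' < n" "x = (\<alpha> i, \<beta> j')"
            using Dchar[OF xD] fx aA bA ainj ij(1) by (metis fst_conv)
          have "(j + (j' + n - j)) mod n = j'" using j' ij by simp
          then have "(\<sigma> ^^ (j' + n - j)) d = x" using pab[OF ij(1,2)] ij j' by simp
          then show "x \<in> {(\<sigma> ^^ k) d |k. True}" by blast
        qed
      qed
    next
      assume "\<exists>i<3. \<exists>j<n. d = (\<beta> j, \<alpha> i)"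
      then obtain i j where ij: "i < 3" "j < n" "d = (\<beta> j, \<alpha> i)" by blast
      show ?thesis
      proof
        show "{(\<sigma> ^^ k) d |k. True} \<subseteq> {d' \<in> ?D. fst d' = fst d}"
          using pba[OF ij(1,2)] ij Dba by auto
      next
        show "{d' \<in> ?D. fst d' = fst d} \<subseteq> {(\<sigma> ^^ k) d |k. True}"
        proof
          fix x assume x: "x \<in> {d' \<in> ?D. fst d' = fst d}"
          then have xD: "x \<in> ?D" and fx: "fst x = \<beta> j" using ij by auto
          obtain i' where i': "i' < 3" "x = (\<beta> j, \<alpha> i')"
            using Dchar[OF xD] fx aB bB binj ij(2) by (metis fst_conv)
          have "(i + (i' + 3 - i)) mod 3 = i'" using i' ij by simp
          then have "(\<sigma> ^^ (i' + 3 - i)) d = x" using pba[OF ij(1,2)] ij i' by simp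
          then show "x \<in> {(\<sigma> ^^ k) d |k. True}" by blast
        qed
      qed
    qed
  qed
  let ?p = "face_perm \<sigma>"
  have sym: "\<forall>a b. F a b \<longrightarrow> F b a" using F by auto
  have pD: "?p ` ?D \<subseteq> ?D"
  proof (rule image_subsetI)
    fix x assume "x \<in> ?D" then show "?p x \<in> ?D" using fp_dart[OF rs sym] by simp
  qed
  have pinj: "inj_on ?p ?D" using fp_inj[OF rs sym] .
  have fab: "\<And>i j. i < 3 \<Longrightarrow> j < n \<Longrightarrow> ?p (\<alpha> i, \<beta> j) = (\<beta> j, \<alpha> (Suc i mod 3))"
    unfolding face_perm_def using sba by simp
  have fba: "\<And>i j. i < 3 \<Longrightarrow> j < n \<Longrightarrow> ?p (\<beta> j, \<alpha> i) = (\<alpha> i, \<beta> (Suc j mod n))"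
    unfolding face_perm_def using sab by simp
  have p2: "\<And>i j k. i < 3 \<Longrightarrow> j < n \<Longrightarrow> (?p ^^ (2 * k)) (\<alpha> i, \<beta> j) = (\<alpha> ((i + k) mod 3), \<beta> ((j + k) mod n))"
  proof -
    fix i j k :: nat assume i: "i < 3" and j: "j < n"
    show "(?p ^^ (2 * k)) (\<alpha> i, \<beta> j) = (\<alpha> ((i + k) mod 3), \<beta> ((j + k) mod n))"
    proof (induction k)
      case 0 then show ?case using i j by simp
    next
      case (Suc k)
      have "(?p ^^ (2 * Suc k)) (\<alpha> i, \<beta> j) = ?p (?p ((?p ^^ (2 * k)) (\<alpha> i, \<beta> j)))" by simp
      also have "\<dots> = ?p (?p (\<alpha> ((i + k) mod 3), \<beta> ((j + k) mod n)))" using Suc by simp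
      also have "\<dots> = ?p (\<beta> ((j + k) mod n), \<alpha> (Suc ((i + k) mod 3) mod 3))" using fab npos by simp
      also have "\<dots> = (\<alpha> (Suc ((i + k) mod 3) mod 3), \<beta> (Suc ((j + k) mod n) mod n))" using fba npos by simp
      also have "Suc ((i + k) mod 3) mod 3 = (i + Suc k) mod 3" by (simp add: mod_Suc_eq)
      also have "Suc ((j + k) mod n) mod n = (j + Suc k) mod n" by (simp add: mod_Suc_eq)
      finally show ?case .
    qed
  qed
  have orb_ab: "\<And>i j. i < 3 \<Longrightarrow> j < n \<Longrightarrow> orb ?p (\<alpha> i, \<beta> j) = ?D"
  proof -
    fix i j :: nat assume i: "i < 3" and j: "j < n"
    show "orb ?p (\<alpha> i, \<beta> j) = ?D"
    proof
      show "orb ?p (\<alpha> i, \<beta> j) \<subseteq> ?D" using orb_sub_D[OF pD Dab[OF i j]] .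
    next
      show "?D \<subseteq> orb ?p (\<alpha> i, \<beta> j)"
      proof
        fix x assume x: "x \<in> ?D"
        show "x \<in> orb ?p (\<alpha> i, \<beta> j)" using Dchar[OF x]
        proof
          assume "\<exists>i'<3. \<exists>j'<n. x = (\<alpha> i', \<beta> j')"
          then obtain i' j' where ij': "i' < 3" "j' < n" "x = (\<alpha> i', \<beta> j')" by blast
          obtain k where k: "(i + k) mod 3 = i'" "(j + k) mod n = j'" using shift_ex[OF n3 i ij'(1) j ij'(2)] by blast
          have "(?p ^^ (2 * k)) (\<alpha> i, \<beta> j) = x" using p2[OF i j] k ij' by simp
          then show ?thesis unfolding orb_def by blast
        next
          assume "\<exists>i'<3. \<exists>j'<n. x = (\<beta> j', \<alpha> i')"
          then obtain i' j' where ij': "i' < 3" "j' < n" "x = (\<beta> j', \<alpha> i')" by blast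
          have i2: "(i' + 2) mod 3 < 3" by simp
          obtain k where k: "(i + k) mod 3 = (i' + 2) mod 3" "(j + k) mod n = j'" using shift_ex[OF n3 i i2 j ij'(2)] by blast
          have "(?p ^^ (2 * k)) (\<alpha> i, \<beta> j) = (\<alpha> ((i' + 2) mod 3), \<beta> j')" using p2[OF i j] k by simp
          then have "(?p ^^ Suc (2 * k)) (\<alpha> i, \<beta> j) = ?p (\<alpha> ((i' + 2) mod 3), \<beta> j')" by simp
          also have "\<dots> = (\<beta> j', \<alpha> (Suc ((i' + 2) mod 3) mod 3))" using fab i2 ij'(2) by blast
          also have "Suc ((i' + 2) mod 3) mod 3 = i'" using ij'(1) by presburger
          finally have "(?p ^^ Suc (2 * k)) (\<alpha> i, \<beta> j) = x" using ij' by simp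
          then show ?thesis unfolding orb_def by blast
        qed
      qed
    qed
  qed
  have orb_all: "\<And>d. d \<in> ?D \<Longrightarrow> orb ?p d = ?D"
  proof -
    fix d assume d: "d \<in> ?D"
    show "orb ?p d = ?D" using Dchar[OF d]
    proof
      assume "\<exists>i<3. \<exists>j<n. d = (\<alpha> i, \<beta> j)"
      then show ?thesis using orb_ab by blast
    next
      assume "\<exists>i<3. \<exists>j<n. d = (\<beta> j, \<alpha> i)"
      then obtain i j where ij: "i < 3" "j < n" "d = (\<beta> j, \<alpha> i)" by blast
      have e: "?p d = (\<alpha> i, \<beta> (Suc j mod n))" using fba ij by simp
      have "?p d \<in> orb ?p d" unfolding orb_def mem_Collect_eq by (rule exI[of _ 1]) simp
      then have "orb ?p (?p d) = orb ?p d" using orb_eq[OF finD pD pinj d] by blast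
      moreover have "orb ?p (?p d) = ?D" using e orb_ab[OF ij(1)] npos by simp
      ultimately show ?thesis by simp
    qed
  qed
  have Dne: "?D \<noteq> {}" using Dab[of 0 0] npos by auto
  have "faces (A \<union> B) F \<sigma> = {?D}"
    unfolding faces_image using orb_all Dne by auto
  then show ?thesis using rs by blast
qed

lemma genus_lower_k3n:
  fixes A B :: "'v set"
  assumes cA: "card A = 3" and fB: "finite B" and cB: "card B = n" and AB: "A \<inter> B = {}"
    and n3: "n mod 3 = 1" and n4: "4 \<le> n"
    and F: "F = (\<lambda>u w. (u \<in> A \<and> w \<in> B) \<or> (u \<in> B \<and> w \<in> A))"
  shows "n \<le> 4 * finite_graph_genus (A \<union> B) F + 2"
proof -
  let ?W = "A \<union> B"
  let ?D = "darts ?W F"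
  have fA: "finite A" using cA by (metis card.infinite zero_neq_numeral)
  obtain \<alpha> :: "nat \<Rightarrow> 'v" where ba: "bij_betw \<alpha> {0..<3} A" using ex_bij_betw_nat_finite[OF fA] cA by metis
  obtain \<beta> :: "nat \<Rightarrow> 'v" where bb: "bij_betw \<beta> {0..<n} B" using ex_bij_betw_nat_finite[OF fB] cB by metis
  have a01: "\<alpha> 0 \<in> A" "\<alpha> 1 \<in> A" "\<alpha> 0 \<noteq> \<alpha> 1"
  proof -
    show "\<alpha> 0 \<in> A" "\<alpha> 1 \<in> A" using bij_betw_apply[OF ba] by simp_all
    have "inj_on \<alpha> {0..<3}" using ba by (simp add: bij_betw_def)
    moreover have "(0::nat) \<in> {0..<3}" "(1::nat) \<in> {0..<3}" by simp_all
    ultimately show "\<alpha> 0 \<noteq> \<alpha> 1" by (metis inj_onD one_neq_zero)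
  qed
  have b01: "\<beta> 0 \<in> B" "\<beta> 1 \<in> B" "\<beta> 0 \<noteq> \<beta> 1"
  proof -
    show "\<beta> 0 \<in> B" "\<beta> 1 \<in> B" using bij_betw_apply[OF bb] n4 by simp_all
    have "inj_on \<beta> {0..<n}" using bb by (simp add: bij_betw_def)
    moreover have "(0::nat) \<in> {0..<n}" "(1::nat) \<in> {0..<n}" using n4 by simp_all
    ultimately show "\<beta> 0 \<noteq> \<beta> 1" by (metis inj_onD one_neq_zero)
  qed
  have disj: "\<And>v. v \<in> A \<Longrightarrow> v \<notin> B" using AB by blast
  have Deq: "?D = A \<times> B \<union> B \<times> A" unfolding darts_def F by auto
  have cD: "card ?D = 6 * n"
  proof -
    have "card (A \<times> B) = 3 * n" using cA cB by (simp add: card_cartesian_product)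
    moreover have "card (B \<times> A) = 3 * n" using cA cB by (simp add: card_cartesian_product)
    moreover have "(A \<times> B) \<inter> (B \<times> A) = {}" using disj by auto
    moreover have "finite (A \<times> B)" "finite (B \<times> A)" using fA fB by simp_all
    ultimately show ?thesis unfolding Deq by (simp add: card_Un_disjoint)
  qed
  have NI: "nonisolated ?W F = ?W"
  proof
    show "nonisolated ?W F \<subseteq> ?W" unfolding nonisolated_def by blast
  next
    show "?W \<subseteq> nonisolated ?W F"
    proof
      fix v assume v: "v \<in> ?W"
      show "v \<in> nonisolated ?W F"
      proof (cases "v \<in> A")
        case True
        then show ?thesis unfolding nonisolated_def F using b01 v by blast
      next
        case False
        then have "v \<in> B" using v by blast
        then show ?thesis unfolding nonisolated_def F using a01 v by blast
      qed
    qed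
  qed
  have cNI: "card (nonisolated ?W F) = n + 3"
    unfolding NI using card_Un_disjoint[OF fA fB AB] cA cB by simp
  let ?R = "\<lambda>a b. a \<in> ?W \<and> b \<in> ?W \<and> F a b"
  have comp: "\<And>v. v \<in> ?W \<Longrightarrow> {w. ?R\<^sup>*\<^sup>* v w} = ?W"
  proof -
    fix v assume v: "v \<in> ?W"
    show "{w. ?R\<^sup>*\<^sup>* v w} = ?W"
    proof
      show "{w. ?R\<^sup>*\<^sup>* v w} \<subseteq> ?W"
      proof
        fix w assume "w \<in> {w. ?R\<^sup>*\<^sup>* v w}"
        then have "?R\<^sup>*\<^sup>* v w" by simp
        then show "w \<in> ?W" using v by (induction rule: rtranclp_induct) auto
      qed
    next
      show "?W \<subseteq> {w. ?R\<^sup>*\<^sup>* v w}"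
      proof
        fix w assume w: "w \<in> ?W"
        have step: "\<And>x y. x \<in> A \<Longrightarrow> y \<in> B \<Longrightarrow> ?R\<^sup>*\<^sup>* x y \<and> ?R\<^sup>*\<^sup>* y x"
        proof -
          fix x y assume "x \<in> A" "y \<in> B"
          then have "?R x y" "?R y x" unfolding F by auto
          then show "?R\<^sup>*\<^sup>* x y \<and> ?R\<^sup>*\<^sup>* y x" by auto
        qed
        have "?R\<^sup>*\<^sup>* v w"
        proof (cases "v \<in> A")
          case vA: True
          show ?thesis
          proof (cases "w \<in> A")
            case True
            then show ?thesis using step[OF vA b01(1)] step[OF True b01(1)]
              by (meson rtranclp_trans)
          next
            case False then have "w \<in> B" using w by blast
            then show ?thesis using step[OF vA] by blast
          qed
        next
          case False
          then have vB: "v \<in> B" using v by blast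
          show ?thesis
          proof (cases "w \<in> A")
            case True
            then show ?thesis using step[OF True vB] by blast
          next
            case False then have "w \<in> B" using w by blast
            then show ?thesis using step[OF a01(1) vB] step[OF a01(1) \<open>w \<in> B\<close>]
              by (meson rtranclp_trans)
          qed
        qed
        then show "w \<in> {w. ?R\<^sup>*\<^sup>* v w}" by simp
      qed
    qed
  qed
  have NC: "nontrivial_components ?W F = {?W}"
  proof -
    have "nontrivial_components ?W F = {{w. ?R\<^sup>*\<^sup>* v w} | v. v \<in> ?W}"
      unfolding nontrivial_components_def NI by simp
    also have "\<dots> = {?W}" using comp a01(1) by blast
    finally show ?thesis .
  qed
  have cNC: "card (nontrivial_components ?W F) = 1" unfolding NC by simp
  let ?P = "\<lambda>g. \<exists>\<sigma>. rotation_system ?W F \<sigma> \<and>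
      2 * g + card (nonisolated ?W F) + card (faces ?W F \<sigma>)
        = 2 * card (nontrivial_components ?W F) + card (darts ?W F) div 2"
  obtain \<sigma>0 where s0: "rotation_system ?W F \<sigma>0" "faces ?W F \<sigma>0 = {?D}"
    using k3n_construct[OF ba bb AB n3 F] by blast
  have "?P (n - 1)"
  proof (intro exI conjI)
    show "rotation_system ?W F \<sigma>0" using s0(1) .
    have "card (faces ?W F \<sigma>0) = 1" using s0(2) by simp
    then show "2 * (n - 1) + card (nonisolated ?W F) + card (faces ?W F \<sigma>0)
        = 2 * card (nontrivial_components ?W F) + card (darts ?W F) div 2"
      using cNI cNC cD n4 by simp
  qed
  then have "?P (finite_graph_genus ?W F)" unfolding finite_graph_genus_def by (rule LeastI)
  then obtain \<sigma> where rs: "rotation_system ?W F \<sigma>"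
    and eq: "2 * finite_graph_genus ?W F + card (nonisolated ?W F) + card (faces ?W F \<sigma>)
        = 2 * card (nontrivial_components ?W F) + card (darts ?W F) div 2" by blast
  have lb: "4 * card (faces ?W F \<sigma>) \<le> card ?D"
    using bip_lower[OF AB fA fB a01 b01 F rs] .
  show ?thesis using eq lb cNI cNC cD by simp
qed

lemma genus_inf:
  fixes V :: "'v set" and E :: "'v \<Rightarrow> 'v \<Rightarrow> bool"
  assumes cA: "card A = 3" and iB: "infinite BB" and AB: "A \<inter> BB = {}" and AV: "A \<subseteq> V" and BV: "BB \<subseteq> V"
    and edges: "\<forall>a\<in>A. \<forall>b\<in>BB. E a b \<and> E b a"
  shows "graph_genus V E = \<infinity>"
proof (rule ccontr)
  assume "graph_genus V E \<noteq> \<infinity>"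
  then obtain N where N: "graph_genus V E = enat N" by (cases "graph_genus V E") auto
  define n where "n = 3 * (4 * N + 1) + 1"
  obtain B where B: "finite B" "card B = n" "B \<subseteq> BB" using infinite_arbitrarily_large[OF iB] by blast
  define F where "F = (\<lambda>u w. (u \<in> A \<and> w \<in> B) \<or> (u \<in> B \<and> w \<in> A))"
  have AB': "A \<inter> B = {}" using AB B(3) by blast
  have fA: "finite A" using cA by (metis card.infinite zero_neq_numeral)
  have n3: "n mod 3 = 1" unfolding n_def by presburger
  have n4: "4 \<le> n" unfolding n_def by simp
  have c1: "finite (A \<union> B)" using fA B(1) by simp
  have c2: "A \<union> B \<subseteq> V" using AV BV B(3) by blast
  have c3: "\<forall>a b. F a b \<longrightarrow> a \<in> A \<union> B \<and> b \<in> A \<union> B \<and> E a b"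
    unfolding F_def using edges B(3) by blast
  have c4: "\<forall>a b. F a b \<longrightarrow> F b a" unfolding F_def by blast
  have c5: "\<forall>a. \<not> F a a" unfolding F_def using AB' by blast
  have sub: "finite_subgraph (A \<union> B) F V E"
    unfolding finite_subgraph_def using c1 c2 c3 c4 c5 by blast
  have "enat (finite_graph_genus (A \<union> B) F) \<le> graph_genus V E"
    unfolding graph_genus_def
    by (rule SUP_upper2[of "(A \<union> B, F)"]) (use sub in auto)
  then have "finite_graph_genus (A \<union> B) F \<le> N" using N by simp
  moreover have "n \<le> 4 * finite_graph_genus (A \<union> B) F + 2"
    using genus_lower_k3n[OF cA B(1) B(2) AB' n3 n4 F_def] .
  ultimately have "3 * (4 * N + 1) + 1 \<le> 4 * N + 2" unfolding n_def by linarith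
  then show False by (simp add: algebra_simps)
qed

theorem corollary3p6:
  assumes "(1::'a::comm_ring_1) \<noteq> 0"
    and "noetherian_ring TYPE('a)"
    and "local_ring TYPE('a)"
    and "\<not> integral_domain TYPE('a)"
    and "graph_genus (AG_vertices TYPE('a)) AG_edge < \<infinity>"
  shows "gorenstein TYPE('a) \<or> (artinian_ring TYPE('a) \<and> finite {I :: 'a set. is_ideal I})"
proof (rule ccontr)
  assume nc: "\<not> ?thesis"
  then have ng: "\<not> gorenstein TYPE('a)" and na: "\<not> (artinian_ring TYPE('a) \<and> finite {I :: 'a set. is_ideal I})"
    by simp_all
  obtain A BB :: "'a set set" where
    cA: "card A = 3" and iB: "infinite BB" and AB: "A \<inter> BB = {}"
    and id: "\<forall>I\<in>A \<union> BB. is_ideal I \<and> I \<noteq> {0}"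
    and pr: "\<forall>a\<in>A. \<forall>b\<in>BB. \<forall>x\<in>a. \<forall>y\<in>b. x * y = 0"
    using alg_main[OF assms(1-4) ng na] apply (elim exE conjE) apply (rule that) apply assumption+ done
  have "A \<noteq> {}" using cA by auto
  then obtain a0 where a0: "a0 \<in> A" by blast
  have "BB \<noteq> {}" using iB by auto
  then obtain b0 where b0: "b0 \<in> BB" by blast
  have pab: "\<And>a b. a \<in> A \<Longrightarrow> b \<in> BB \<Longrightarrow> ideal_prod a b = {0} \<and> ideal_prod b a = {0}"
  proof -
    fix a b assume ab: "a \<in> A" "b \<in> BB"
    have "\<forall>x\<in>a. \<forall>y\<in>b. x * y = 0" using pr ab by blast
    then have "ideal_prod a b = {0}" by (rule ideal_prod_zero)
    then show "ideal_prod a b = {0} \<and> ideal_prod b a = {0}" using ideal_prod_comm[of a b] by simp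
  qed
  have AV: "A \<subseteq> AG_vertices TYPE('a)"
  proof
    fix a assume a: "a \<in> A"
    have "is_ideal b0" "b0 \<noteq> {0}" using id b0 by auto
    moreover have "is_ideal a" "a \<noteq> {0}" using id a by auto
    moreover have "ideal_prod a b0 = {0}" using pab[OF a b0] by blast
    ultimately have "annihilating_ideal a" unfolding annihilating_ideal_def by (intro conjI exI[of _ b0])
    then show "a \<in> AG_vertices TYPE('a)" unfolding AG_vertices_def using \<open>a \<noteq> {0}\<close> by simp
  qed
  have BV: "BB \<subseteq> AG_vertices TYPE('a)"
  proof
    fix b assume b: "b \<in> BB"
    have "is_ideal a0" "a0 \<noteq> {0}" using id a0 by auto
    moreover have "is_ideal b" "b \<noteq> {0}" using id b by auto
    moreover have "ideal_prod b a0 = {0}" using pab[OF a0 b] by blast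
    ultimately have "annihilating_ideal b" unfolding annihilating_ideal_def by (intro conjI exI[of _ a0])
    then show "b \<in> AG_vertices TYPE('a)" unfolding AG_vertices_def using \<open>b \<noteq> {0}\<close> by simp
  qed
  have edges: "\<forall>a\<in>A. \<forall>b\<in>BB. AG_edge a b \<and> AG_edge b a"
  proof (intro ballI)
    fix a b assume ab: "a \<in> A" "b \<in> BB"
    have "a \<noteq> b" using AB ab by blast
    moreover have "b \<noteq> a" using \<open>a \<noteq> b\<close> by simp
    ultimately show "AG_edge a b \<and> AG_edge b a" unfolding AG_edge_def using pab[OF ab] by simp
  qed
  have "graph_genus (AG_vertices TYPE('a)) AG_edge = \<infinity>"
    using genus_inf[OF cA iB AB AV BV edges] .
  then show False using assms(5) by simp
qed

end
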